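(* Let $X=(X_1,\dots,X_p)\in\mathbb{R}^p$ satisfy $X\sim\mathcal{N}(0,\Sigma)$ with $\Sigma$ positive definite, and let $Y$ be a real random variable with $\mathbb{E}Y^2<\infty$, jointly distributed with $X$. Let $\beta^*=\arg\min_{w\in\mathbb{R}^p}\mathbb{E}[Y-X^\top w]^2=\Sigma^{-1}\mathbb{E}(XY)$, and for $j\in[p]$ let $\beta^{(j)}=\arg\min_{w\in\mathbb{R}^{p-1}}\mathbb{E}[Y-X_{-j}^\top w]^2$, where $X_{-j}\in\mathbb{R}^{p-1}$ is $X$ with its $j$-th coordinate removed and $\beta^*_{-j}\in\mathbb{R}^{p-1}$ is $\beta^*$ with its $j$-th entry removed. Define the population dropout and retraining variable importance estimates (with negative mean squared error as predictive skill, restricted to linear predictors) $$\widehat{\mathrm{VI}}^{(\mathrm{DR})}_j=\mathbb{E}[Y-X_{-j}^\top\beta^*_{-j}]^2-\mathbb{E}[Y-X^\top\beta^*]^2,\qquad \widehat{\mathrm{VI}}^{(\mathrm{RT})}_j=\mathbb{E}[Y-X_{-j}^\top\beta^{(j)}]^2-\mathbb{E}[Y-X^\top\beta^*]^2 .$$ Then $$\widehat{\mathrm{VI}}^{(\mathrm{DR})}_j-\widehat{\mathrm{VI}}^{(\mathrm{RT})}_j=\frac{\gamma_j^\top\Sigma_{(j)}^{-1}\gamma_j}{(\Sigma_{jj}-\gamma_j^\top\Sigma_{(j)}^{-1}\gamma_j)^2}\Big[\mathbb{E}(X_jY)-\gamma_j^\top\Sigma_{(j)}^{-1}\mathbb{E}(X_{-j}Y)\Big]^2,$$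 where $\gamma_j=\mathbb{E}(X_jX_{-j})\in\mathbb{R}^{p-1}$ and $\Sigma_{(j)}=\mathbb{E}(X_{-j}X_{-j}^\top)\in\mathbb{R}^{(p-1)\times(p-1)}$ is $\Sigma$ with its $j$-th row and column removed.
   Context: The dropout method predicts $Y$ from $X_{-j}$ by plugging the full linear model with $X_j$ replaced by its mean $0$, i.e. uses $X_{-j}^\top\beta^*_{-j}$; the retraining method refits a linear model on $X_{-j}$, i.e. uses $X_{-j}^\top\beta^{(j)}$. *)

theory Defs
  imports "HOL-Probability.Probability" "Jordan_Normal_Form.Determinant"
    "Jordan_Normal_Form.Gauss_Jordan_Elimination"
begin

text \<open>Vectors in R^p are represented by functions on the index set {..<p}
  (random vector X: \<open>X \<omega> i\<close>, i < p).\<close>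

definition pos_def_mat :: "nat \<Rightarrow> real mat \<Rightarrow> bool" where
  "pos_def_mat p S \<longleftrightarrow> S \<in> carrier_mat p p \<and> S\<^sup>T = S \<and>
     (\<forall>v \<in> carrier_vec p. v \<noteq> 0\<^sub>v p \<longrightarrow> v \<bullet> (S *\<^sub>v v) > 0)"

text \<open>X ~ N(0, S): every linear combination w^T X is centered normal with
  variance w^T S w (degenerate, i.e. a.s. 0, when that variance is 0).\<close>
definition centered_gaussian_vector ::
  "'a measure \<Rightarrow> nat \<Rightarrow> ('a \<Rightarrow> nat \<Rightarrow> real) \<Rightarrow> real mat \<Rightarrow> bool" where
  "centered_gaussian_vector M p X S \<longleftrightarrow>
     (\<forall>i<p. (\<lambda>\<omega>. X \<omega> i) \<in> borel_measurable M) \<and>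
     (\<forall>w :: nat \<Rightarrow> real.
        let s = (\<Sum>i<p. \<Sum>k<p. w i * w k * S $$ (i, k)) in
        if s > 0 then distributed M lborel (\<lambda>\<omega>. \<Sum>i<p. w i * X \<omega> i) (normal_density 0 (sqrt s))
        else (AE \<omega> in M. (\<Sum>i<p. w i * X \<omega> i) = 0))"

definition lin_mse :: "'a measure \<Rightarrow> ('a \<Rightarrow> nat \<Rightarrow> real) \<Rightarrow> ('a \<Rightarrow> real) \<Rightarrow> nat set \<Rightarrow> (nat \<Rightarrow> real) \<Rightarrow> real" where
  "lin_mse M X Y I w = integral\<^sup>L M (\<lambda>\<omega>. (Y \<omega> - (\<Sum>i\<in>I. X \<omega> i * w i))\<^sup>2)"

text \<open>Index of the k-th remaining coordinate after removing coordinate j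
  (same convention as mat_delete).\<close>
definition skip_idx :: "nat \<Rightarrow> nat \<Rightarrow> nat" where
  "skip_idx j k = (if k < j then k else Suc k)"

definition inv_mat :: "real mat \<Rightarrow> real mat" where
  "inv_mat A = the (mat_inverse A)"

end

theory Submission
  imports Defs
begin
lemma final_alg:
  fixes A Ai :: "real mat" and u v c g :: "real vec"
  assumes A: "A \<in> carrier_mat n n" and Ai: "Ai \<in> carrier_mat n n" and inv: "Ai * A = 1\<^sub>m n" and inv2: "A * Ai = 1\<^sub>m n"
    and sym: "A\<^sup>T = A"
    and u: "u \<in> carrier_vec n" and v: "v \<in> carrier_vec n" and c: "c \<in> carrier_vec n" and g: "g \<in> carrier_vec n"
    and V1: "A *\<^sub>v v = c" and V2: "A *\<^sub>v u + s \<cdot>\<^sub>v g = c" and V3: "scalar_prod g u + S * s = bj"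
    and nz: "S - scalar_prod g (Ai *\<^sub>v g) \<noteq> 0"
  shows "(-2 * scalar_prod u c + scalar_prod u (A *\<^sub>v u)) - (-2 * scalar_prod v c + scalar_prod v (A *\<^sub>v v))
     = scalar_prod g (Ai *\<^sub>v g) / (S - scalar_prod g (Ai *\<^sub>v g))\<^sup>2 * (bj - scalar_prod g (Ai *\<^sub>v c))\<^sup>2"
proof -
  define z where "z = Ai *\<^sub>v g"
  define q where "q = scalar_prod g z"
  have z: "z \<in> carrier_vec n" using Ai g by (simp add: z_def)
  have leftinv: "\<And>x. x \<in> carrier_vec n \<Longrightarrow> Ai *\<^sub>v (A *\<^sub>v x) = x"
    using A Ai inv by (metis assoc_mult_mat_vec one_mult_mat_vec)
  have symm: "\<And>x y. x \<in> carrier_vec n \<Longrightarrow> y \<in> carrier_vec n \<Longrightarrow> scalar_prod x (A *\<^sub>v y) = scalar_prod y (A *\<^sub>v x)"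
  proof -
    fix x y :: "real vec" assume x: "x \<in> carrier_vec n" and y: "y \<in> carrier_vec n"
    have "scalar_prod y (A *\<^sub>v x) = scalar_prod (A\<^sup>T *\<^sub>v y) x"
      using transpose_vec_mult_scalar[OF A x y] by simp
    also have "\<dots> = scalar_prod x (A *\<^sub>v y)" using sym x y A by (simp add: comm_scalar_prod[of _ n])
    finally show "scalar_prod x (A *\<^sub>v y) = scalar_prod y (A *\<^sub>v x)" by simp
  qed
  have Au: "A *\<^sub>v u = c - s \<cdot>\<^sub>v g" using V2 A u g c by auto
  have Auv: "A *\<^sub>v (u - v) = - s \<cdot>\<^sub>v g"
    using Au V1 A u v g c by (auto simp: mult_minus_distrib_mat_vec)
  have uv: "u - v = - s \<cdot>\<^sub>v z"
  proof -
    have "u - v = Ai *\<^sub>v (A *\<^sub>v (u - v))" using leftinv u v by simp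
    also have "\<dots> = - s \<cdot>\<^sub>v z" unfolding Auv z_def using Ai g by (simp add: mult_mat_vec)
    finally show ?thesis .
  qed
  have ueq: "u = v + (- s) \<cdot>\<^sub>v z"
  proof (rule eq_vecI)
    fix i assume i: "i < dim_vec (v + (- s) \<cdot>\<^sub>v z)"
    have "(u - v) $ i = (- s \<cdot>\<^sub>v z) $ i" using uv by simp
    then show "u $ i = (v + (- s) \<cdot>\<^sub>v z) $ i" using i u v z by simp
  qed (use u v z in simp)
  have vc: "v = Ai *\<^sub>v c" using leftinv[OF v] V1 by simp
  have Az: "A *\<^sub>v z = g" unfolding z_def using A Ai inv2 g by (metis assoc_mult_mat_vec one_mult_mat_vec)
  have zAv: "scalar_prod z (A *\<^sub>v v) = scalar_prod v (A *\<^sub>v z)" using symm v z by simp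
  have e1: "scalar_prod v g = scalar_prod z c" using zAv Az V1 by simp
  have e2: "scalar_prod z g = q" unfolding q_def using comm_scalar_prod[OF z g] by simp
  have D: "(-2 * scalar_prod u c + scalar_prod u (A *\<^sub>v u)) - (-2 * scalar_prod v c + scalar_prod v (A *\<^sub>v v)) = s^2 * q"
    unfolding ueq using A v z c g
    apply (simp add: add_scalar_prod_distrib[of _ n] scalar_prod_add_distrib[of _ n] mult_add_distrib_mat_vec[of _ n n] mult_mat_vec[of _ n n] Az V1 e1 e2)
    by (simp add: power2_eq_square algebra_simps)
  have gu: "scalar_prod g u = scalar_prod g (Ai *\<^sub>v c) - s * q"
    unfolding ueq q_def using g v z vc by (simp add: scalar_prod_add_distrib[of _ n])
  have bj: "bj - scalar_prod g (Ai *\<^sub>v c) = s * (S - q)" using V3 gu by (simp add: algebra_simps)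
  have nz': "S - q \<noteq> 0" using nz by (simp add: q_def z_def)
  have "q / (S - q)\<^sup>2 * (s * (S - q))\<^sup>2 = s^2 * q" using nz' by (simp add: power_mult_distrib)
  then show ?thesis unfolding D bj by (simp add: q_def z_def)
qed
lemma quad_expand:
  fixes Sg :: "nat \<Rightarrow> nat \<Rightarrow> real" and \<beta> :: "nat \<Rightarrow> real"
  assumes fin: "finite S" and sym: "\<forall>i\<in>S. \<forall>k\<in>S. Sg i k = Sg k i" and m: "m \<in> S"
  shows "(\<Sum>i\<in>S. \<Sum>k\<in>S. (\<beta> i + t * (if i = m then 1 else 0)) * (\<beta> k + t * (if k = m then 1 else 0)) * Sg i k)
     = (\<Sum>i\<in>S. \<Sum>k\<in>S. \<beta> i * \<beta> k * Sg i k) + 2 * t * (\<Sum>k\<in>S. Sg m k * \<beta> k) + t^2 * Sg m m"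
proof -
  have e: "\<And>i k. (\<beta> i + t * (if i = m then 1 else 0)) * (\<beta> k + t * (if k = m then 1 else 0)) * Sg i k
     = \<beta> i * \<beta> k * Sg i k + (if i = m then t * \<beta> k * Sg i k else 0) + (if k = m then t * \<beta> i * Sg i k else 0)
       + (if i = m then (if k = m then t^2 * Sg i k else 0) else 0)"
    by (simp add: algebra_simps power2_eq_square)
  have pull: "\<And>F i. (\<Sum>k\<in>S. if i = m then F i k else 0) = (if i = m then (\<Sum>k\<in>S. F i k) else (0::real))"
    by simp
  have s1: "(\<Sum>i\<in>S. \<Sum>k\<in>S. (if i = m then t * \<beta> k * Sg i k else 0)) = t * (\<Sum>k\<in>S. Sg m k * \<beta> k)"
    using fin m by (subst sum.swap) (simp add: sum_distrib_left algebra_simps)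
  have s2: "(\<Sum>i\<in>S. \<Sum>k\<in>S. (if k = m then t * \<beta> i * Sg i k else 0)) = t * (\<Sum>k\<in>S. Sg m k * \<beta> k)"
  proof -
    have "(\<Sum>i\<in>S. \<Sum>k\<in>S. (if k = m then t * \<beta> i * Sg i k else 0)) = (\<Sum>i\<in>S. t * \<beta> i * Sg i m)"
      using fin m by simp
    also have "\<dots> = t * (\<Sum>k\<in>S. Sg m k * \<beta> k)" using sym m
      by (simp add: sum_distrib_left algebra_simps)
    finally show ?thesis .
  qed
  have s3: "(\<Sum>i\<in>S. \<Sum>k\<in>S. (if i = m then (if k = m then t^2 * Sg i k else 0) else 0)) = t^2 * Sg m m"
    using fin m by (subst sum.swap) simp
  show ?thesis unfolding e sum.distrib s1 s2 s3 by (simp add: algebra_simps)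
qed

lemma normal_eq:
  fixes Sg :: "nat \<Rightarrow> nat \<Rightarrow> real" and b \<beta> :: "nat \<Rightarrow> real"
  assumes fin: "finite S" and sym: "\<forall>i\<in>S. \<forall>k\<in>S. Sg i k = Sg k i" and m: "m \<in> S" and pos: "Sg m m > 0"
    and min: "\<And>w. C - 2 * (\<Sum>i\<in>S. w i * b i) + (\<Sum>i\<in>S. \<Sum>k\<in>S. w i * w k * Sg i k)
      \<ge> C - 2 * (\<Sum>i\<in>S. \<beta> i * b i) + (\<Sum>i\<in>S. \<Sum>k\<in>S. \<beta> i * \<beta> k * Sg i k)"
  shows "(\<Sum>k\<in>S. Sg m k * \<beta> k) = b m"
proof (rule ccontr)
  assume ne: "(\<Sum>k\<in>S. Sg m k * \<beta> k) \<noteq> b m"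
  define g where "g = (\<Sum>k\<in>S. Sg m k * \<beta> k) - b m"
  define t where "t = - g / Sg m m"
  define w where "w = (\<lambda>i. \<beta> i + t * (if i = m then 1 else 0))"
  have lin: "(\<Sum>i\<in>S. w i * b i) = (\<Sum>i\<in>S. \<beta> i * b i) + t * b m"
  proof -
    have "\<And>i. w i * b i = \<beta> i * b i + (if i = m then t * b i else 0)" unfolding w_def by (simp add: algebra_simps)
    then show ?thesis using fin m by (simp add: sum.distrib)
  qed
  have q: "(\<Sum>i\<in>S. \<Sum>k\<in>S. w i * w k * Sg i k) = (\<Sum>i\<in>S. \<Sum>k\<in>S. \<beta> i * \<beta> k * Sg i k) + 2 * t * (\<Sum>k\<in>S. Sg m k * \<beta> k) + t^2 * Sg m m"
    unfolding w_def by (rule quad_expand[OF fin sym m])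
  have "2 * t * g + t^2 * Sg m m \<ge> 0" using min[of w] unfolding lin q g_def by (simp add: algebra_simps)
  moreover have "2 * t * g + t^2 * Sg m m = - (g^2) / Sg m m" unfolding t_def using pos
    by (simp add: field_simps power2_eq_square)
  moreover have "g^2 / Sg m m > 0" using ne pos unfolding g_def by simp
  ultimately show False by linarith
qed
lemma gauss_sq:
  assumes P: "prob_space M" and D: "distributed M lborel Z (normal_density 0 \<sigma>)" and s: "\<sigma> > 0"
  shows "integrable M (\<lambda>x. (Z x)^2) \<and> integral\<^sup>L M (\<lambda>x. (Z x)^2) = \<sigma>^2"
proof
  have i1: "integrable lborel (\<lambda>x. normal_density 0 \<sigma> x * (x - 0)^2)"
    by (rule integrable_normal_moment[OF s])
  show "integrable M (\<lambda>x. (Z x)^2)"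
    using distributed_integrable[OF D, of "\<lambda>x. x^2"] i1 by simp
  have "integral\<^sup>L M (\<lambda>x. (Z x)^2) = integral\<^sup>L lborel (\<lambda>x. normal_density 0 \<sigma> x * (x - 0)^(2*1))"
    using distributed_integral[OF D, of "\<lambda>x. x^2"] by simp
  also have "\<dots> = \<sigma>^2" using integral_normal_moment_even[OF s, of 0 1] by (simp add: power2_eq_square)
  finally show "integral\<^sup>L M (\<lambda>x. (Z x)^2) = \<sigma>^2" .
qed

lemma quad_vec:
  fixes S :: "real mat"
  assumes "S \<in> carrier_mat p p"
  shows "scalar_prod (vec p w) (S *\<^sub>v vec p w) = (\<Sum>i<p. \<Sum>k<p. w i * w k * S $$ (i, k))"
  using assms
  by (simp add: scalar_prod_def mult_mat_vec_def row_def lessThan_atLeast0 sum_distrib_left algebra_simps)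

lemma quad_nonneg:
  assumes "pos_def_mat p S"
  shows "(\<Sum>i<p. \<Sum>k<p. w i * w k * S $$ (i, k)) \<ge> 0"
    and "(\<exists>i<p. w i \<noteq> 0) \<Longrightarrow> (\<Sum>i<p. \<Sum>k<p. w i * w k * S $$ (i, k)) > 0"
proof -
  have C: "S \<in> carrier_mat p p" and pd: "\<And>v. v \<in> carrier_vec p \<Longrightarrow> v \<noteq> 0\<^sub>v p \<Longrightarrow> scalar_prod v (S *\<^sub>v v) > 0"
    using assms unfolding pos_def_mat_def by auto
  show pos: "(\<exists>i<p. w i \<noteq> 0) \<Longrightarrow> (\<Sum>i<p. \<Sum>k<p. w i * w k * S $$ (i, k)) > 0"
  proof -
    assume "\<exists>i<p. w i \<noteq> 0"
    then obtain i where i: "i < p" "w i \<noteq> 0" by auto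
    have "vec p w \<noteq> 0\<^sub>v p"
    proof
      assume "vec p w = 0\<^sub>v p"
      then have "vec p w $ i = 0\<^sub>v p $ i" by simp
      then show False using i by simp
    qed
    then show ?thesis using pd[of "vec p w"] quad_vec[OF C] by simp
  qed
  show "(\<Sum>i<p. \<Sum>k<p. w i * w k * S $$ (i, k)) \<ge> 0"
  proof (cases "\<exists>i<p. w i \<noteq> 0")
    case True then show ?thesis using pos by fastforce
  next
    case False then show ?thesis by simp
  qed
qed

lemma cgv_quad:
  assumes P: "prob_space M" and G: "centered_gaussian_vector M p X S" and pd: "pos_def_mat p S"
  shows "integrable M (\<lambda>\<omega>. (\<Sum>i<p. w i * X \<omega> i)^2) \<and>
     integral\<^sup>L M (\<lambda>\<omega>. (\<Sum>i<p. w i * X \<omega> i)^2) = (\<Sum>i<p. \<Sum>k<p. w i * w k * S $$ (i, k))"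
proof -
  define s where "s = (\<Sum>i<p. \<Sum>k<p. w i * w k * S $$ (i, k))"
  have G': "if s > 0 then distributed M lborel (\<lambda>\<omega>. \<Sum>i<p. w i * X \<omega> i) (normal_density 0 (sqrt s))
        else (AE \<omega> in M. (\<Sum>i<p. w i * X \<omega> i) = 0)"
    using G unfolding centered_gaussian_vector_def s_def Let_def by blast
  show ?thesis
  proof (cases "s > 0")
    case True
    then have "distributed M lborel (\<lambda>\<omega>. \<Sum>i<p. w i * X \<omega> i) (normal_density 0 (sqrt s))" using G' by simp
    from gauss_sq[OF P this] True show ?thesis by (simp add: s_def[symmetric])
  next
    case False
    then have s0: "s = 0" using quad_nonneg(1)[OF pd, of w] unfolding s_def by linarith
    have mX: "\<And>i. i < p \<Longrightarrow> (\<lambda>\<omega>. X \<omega> i) \<in> borel_measurable M"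
      using G unfolding centered_gaussian_vector_def by blast
    have meas: "(\<lambda>\<omega>. (\<Sum>i<p. w i * X \<omega> i)^2) \<in> borel_measurable M"
      by (intro borel_measurable_power borel_measurable_sum borel_measurable_times borel_measurable_const) (auto simp: mX)
    have ae: "AE \<omega> in M. (\<Sum>i<p. w i * X \<omega> i)^2 = 0" using G' False by (auto elim: AE_mp)
    have "integrable M (\<lambda>\<omega>. (\<Sum>i<p. w i * X \<omega> i)^2) = integrable M (\<lambda>\<omega>. 0::real)"
      by (rule integrable_cong_AE) (use ae meas in auto)
    moreover have "integral\<^sup>L M (\<lambda>\<omega>. (\<Sum>i<p. w i * X \<omega> i)^2) = integral\<^sup>L M (\<lambda>\<omega>. 0::real)"
      by (rule integral_cong_AE) (use ae meas in auto)
    ultimately show ?thesis using s0 by (simp add: s_def)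
  qed
qed
lemma delta_sum1: "finite A \<Longrightarrow> (\<Sum>l\<in>A. (if l = a then 1 else 0) * (f l :: real)) = (if a \<in> A then f a else 0)"
  by (simp add: if_distrib[of "\<lambda>x. x * _"] cong: if_cong)

lemma delta_sum2: "finite A \<Longrightarrow> (\<Sum>l\<in>A. c * ((if l = a then 1 else 0) * (f l :: real))) = (if a \<in> A then c * f a else 0)"
  unfolding sum_distrib_left[symmetric] by (simp add: delta_sum1)

lemma cgv_cov:
  assumes P: "prob_space M" and G: "centered_gaussian_vector M p X S" and pd: "pos_def_mat p S"
    and i: "i < p" and k: "k < p"
  shows "integrable M (\<lambda>\<omega>. X \<omega> i * X \<omega> k) \<and> integral\<^sup>L M (\<lambda>\<omega>. X \<omega> i * X \<omega> k) = S $$ (i, k)"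
proof -
  have C: "S \<in> carrier_mat p p" and T: "S\<^sup>T = S" using pd unfolding pos_def_mat_def by auto
  have sym: "S $$ (k, i) = S $$ (i, k)" using T C i k by (metis carrier_matD index_transpose_mat(1))
  have single: "integrable M (\<lambda>\<omega>. (X \<omega> a)^2) \<and> integral\<^sup>L M (\<lambda>\<omega>. (X \<omega> a)^2) = S $$ (a, a)" if a: "a < p" for a
  proof -
    have "(\<Sum>l<p. (if l = a then 1 else 0) * X \<omega> l) = X \<omega> a" for \<omega> using a by (simp add: delta_sum1)
    moreover have "(\<Sum>l<p. \<Sum>m<p. (if l = a then 1 else 0) * (if m = a then 1 else 0) * S $$ (l, m)) = S $$ (a, a)"
      using a by (simp add: delta_sum2 delta_sum1 mult.assoc)
    ultimately show ?thesis using cgv_quad[OF P G pd, of "\<lambda>l. if l = a then 1 else 0"] by simp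
  qed
  define w where "w = (\<lambda>l. (if l = i then 1 else 0) + (if l = k then (1::real) else 0))"
  have sw: "(\<Sum>l<p. w l * X \<omega> l) = X \<omega> i + X \<omega> k" for \<omega>
    using i k by (simp add: w_def distrib_right sum.distrib delta_sum1)
  have qw: "(\<Sum>l<p. \<Sum>m<p. w l * w m * S $$ (l, m)) = S $$ (i, i) + S $$ (i, k) + S $$ (k, i) + S $$ (k, k)"
    using i k by (simp add: w_def distrib_right distrib_left sum.distrib delta_sum2 delta_sum1 mult.assoc)
  have two: "integrable M (\<lambda>\<omega>. (X \<omega> i + X \<omega> k)^2) \<and> integral\<^sup>L M (\<lambda>\<omega>. (X \<omega> i + X \<omega> k)^2) = S $$ (i, i) + S $$ (i, k) + S $$ (k, i) + S $$ (k, k)"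
    using cgv_quad[OF P G pd, of w] unfolding sw qw by simp
  have eq: "(\<lambda>\<omega>. X \<omega> i * X \<omega> k) = (\<lambda>\<omega>. ((X \<omega> i + X \<omega> k)^2 - (X \<omega> i)^2 - (X \<omega> k)^2) / 2)"
    by (auto simp: power2_eq_square algebra_simps)
  show ?thesis unfolding eq using two single[OF i] single[OF k] sym by simp
qed
lemma int_XY:
  assumes P: "prob_space M" and G: "centered_gaussian_vector M p X S" and pd: "pos_def_mat p S"
    and Y: "Y \<in> borel_measurable M" and Y2: "integrable M (\<lambda>\<omega>. (Y \<omega>)\<^sup>2)" and i: "i < p"
  shows "integrable M (\<lambda>\<omega>. X \<omega> i * Y \<omega>)"
proof -
  have mX: "(\<lambda>\<omega>. X \<omega> i) \<in> borel_measurable M" using G i unfolding centered_gaussian_vector_def by blast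
  have X2: "integrable M (\<lambda>\<omega>. X \<omega> i * X \<omega> i)" using cgv_cov[OF P G pd i i] by simp
  have I: "integrable M (\<lambda>\<omega>. X \<omega> i * X \<omega> i + (Y \<omega>)\<^sup>2)" using X2 Y2 by simp
  have m: "(\<lambda>\<omega>. X \<omega> i * Y \<omega>) \<in> borel_measurable M" using mX Y by simp
  have b: "AE \<omega> in M. norm (X \<omega> i * Y \<omega>) \<le> norm (X \<omega> i * X \<omega> i + (Y \<omega>)\<^sup>2)"
  proof (intro AE_I2)
    fix \<omega>
    define a where "a = \<bar>X \<omega> i\<bar>"
    define c where "c = \<bar>Y \<omega>\<bar>"
    have h0: "0 \<le> (a - c)^2" by simp
    have h1: "(a - c)^2 = X \<omega> i * X \<omega> i + (Y \<omega>)\<^sup>2 - 2 * (a * c)"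
      unfolding a_def c_def by (simp add: power2_eq_square algebra_simps)
    have h2: "0 \<le> a * c" unfolding a_def c_def by simp
    have "\<bar>X \<omega> i * Y \<omega>\<bar> = a * c" unfolding a_def c_def by (simp add: abs_mult)
    then have "\<bar>X \<omega> i * Y \<omega>\<bar> \<le> X \<omega> i * X \<omega> i + (Y \<omega>)\<^sup>2" using h0 h1 h2 by linarith
    then show "norm (X \<omega> i * Y \<omega>) \<le> norm (X \<omega> i * X \<omega> i + (Y \<omega>)\<^sup>2)" by simp
  qed
  show ?thesis by (rule Bochner_Integration.integrable_bound[OF I m b])
qed
lemma mse_expand:
  assumes P: "prob_space M" and G: "centered_gaussian_vector M p X S" and pd: "pos_def_mat p S"
    and Y: "Y \<in> borel_measurable M" and Y2: "integrable M (\<lambda>\<omega>. (Y \<omega>)\<^sup>2)" and I: "I \<subseteq> {..<p}"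
  shows "lin_mse M X Y I w = integral\<^sup>L M (\<lambda>\<omega>. (Y \<omega>)\<^sup>2)
     - 2 * (\<Sum>i\<in>I. w i * integral\<^sup>L M (\<lambda>\<omega>. X \<omega> i * Y \<omega>))
     + (\<Sum>i\<in>I. \<Sum>k\<in>I. w i * w k * S $$ (i, k))"
proof -
  have fin: "finite I" using I finite_subset by blast
  have iXY: "\<And>i. i \<in> I \<Longrightarrow> integrable M (\<lambda>\<omega>. X \<omega> i * Y \<omega>)" using int_XY[OF P G pd Y Y2] I by blast
  have iXX: "\<And>i k. i \<in> I \<Longrightarrow> k \<in> I \<Longrightarrow> integrable M (\<lambda>\<omega>. X \<omega> i * X \<omega> k) \<and> integral\<^sup>L M (\<lambda>\<omega>. X \<omega> i * X \<omega> k) = S $$ (i, k)"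
    using cgv_cov[OF P G pd] I by blast
  have pw: "(Y \<omega> - (\<Sum>i\<in>I. X \<omega> i * w i))\<^sup>2 = (Y \<omega>)\<^sup>2 - 2 * (\<Sum>i\<in>I. w i * (X \<omega> i * Y \<omega>))
      + (\<Sum>i\<in>I. \<Sum>k\<in>I. w i * w k * (X \<omega> i * X \<omega> k))" for \<omega>
  proof -
    have sq: "(\<Sum>i\<in>I. X \<omega> i * w i)\<^sup>2 = (\<Sum>i\<in>I. \<Sum>k\<in>I. w i * w k * (X \<omega> i * X \<omega> k))"
      unfolding power2_eq_square sum_product by (simp add: algebra_simps)
    have lin: "Y \<omega> * (\<Sum>i\<in>I. X \<omega> i * w i) = (\<Sum>i\<in>I. w i * (X \<omega> i * Y \<omega>))"
      by (simp add: sum_distrib_left algebra_simps)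
    show ?thesis unfolding power2_diff sq lin[symmetric] by (simp add: algebra_simps)
  qed
  have i1: "integrable M (\<lambda>\<omega>. \<Sum>i\<in>I. w i * (X \<omega> i * Y \<omega>))" using iXY by auto
  have i2: "integrable M (\<lambda>\<omega>. \<Sum>i\<in>I. \<Sum>k\<in>I. w i * w k * (X \<omega> i * X \<omega> k))" using iXX by auto
  have "lin_mse M X Y I w = integral\<^sup>L M (\<lambda>\<omega>. (Y \<omega>)\<^sup>2 - 2 * (\<Sum>i\<in>I. w i * (X \<omega> i * Y \<omega>))
      + (\<Sum>i\<in>I. \<Sum>k\<in>I. w i * w k * (X \<omega> i * X \<omega> k)))"
    unfolding lin_mse_def pw ..
  also have "\<dots> = integral\<^sup>L M (\<lambda>\<omega>. (Y \<omega>)\<^sup>2) - 2 * integral\<^sup>L M (\<lambda>\<omega>. \<Sum>i\<in>I. w i * (X \<omega> i * Y \<omega>))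
      + integral\<^sup>L M (\<lambda>\<omega>. \<Sum>i\<in>I. \<Sum>k\<in>I. w i * w k * (X \<omega> i * X \<omega> k))"
    using Y2 i1 i2 by simp
  also have "integral\<^sup>L M (\<lambda>\<omega>. \<Sum>i\<in>I. w i * (X \<omega> i * Y \<omega>)) = (\<Sum>i\<in>I. w i * integral\<^sup>L M (\<lambda>\<omega>. X \<omega> i * Y \<omega>))"
    using iXY by (simp add: integral_sum)
  also have "integral\<^sup>L M (\<lambda>\<omega>. \<Sum>i\<in>I. \<Sum>k\<in>I. w i * w k * (X \<omega> i * X \<omega> k)) = (\<Sum>i\<in>I. \<Sum>k\<in>I. w i * w k * S $$ (i, k))"
    using iXX by (simp add: integral_sum)
  finally show ?thesis .
qed
lemma skip_idx_lt: "j < p \<Longrightarrow> k < p - 1 \<Longrightarrow> skip_idx j k < p"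
  by (auto simp add: skip_idx_def)

lemma skip_idx_ne: "skip_idx j k \<noteq> j"
  by (simp add: skip_idx_def)

lemma skip_idx_inj: "inj (skip_idx j)"
  by (auto simp: inj_on_def skip_idx_def split: if_splits)

lemma skip_idx_image: "j < p \<Longrightarrow> skip_idx j ` {..<p - 1} = {..<p} - {j}"
proof (intro equalityI subsetI)
  fix x assume "j < p" "x \<in> skip_idx j ` {..<p - 1}"
  then show "x \<in> {..<p} - {j}" by (auto simp: skip_idx_def)
next
  fix x assume j: "j < p" and x: "x \<in> {..<p} - {j}"
  show "x \<in> skip_idx j ` {..<p - 1}"
  proof (cases "x < j")
    case True then show ?thesis using j by (intro image_eqI[of _ _ x]) (auto simp: skip_idx_def)
  next
    case False then show ?thesis using j x by (intro image_eqI[of _ _ "x - 1"]) (auto simp: skip_idx_def)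
  qed
qed

lemma sum_skip1: "j < p \<Longrightarrow> (\<Sum>i\<in>{..<p} - {j}. g i) = (\<Sum>k<p - 1. g (skip_idx j k))"
  using sum.reindex[of "skip_idx j" "{..<p - 1}" g] skip_idx_inj[of j] skip_idx_image[of j p]
  by (simp add: inj_on_subset)

lemma sum_skip2: "j < p \<Longrightarrow> (\<Sum>i<p. g i) = g j + (\<Sum>k<p - 1. g (skip_idx j k))"
  using sum.remove[of "{..<p}" j g] sum_skip1[of j p g] by simp

lemma mat_delete_idx:
  assumes "S \<in> carrier_mat p p" "k < p - 1" "l < p - 1"
  shows "mat_delete S j j $$ (k, l) = S $$ (skip_idx j k, skip_idx j l)"
  using assms by (simp add: mat_delete_def skip_idx_def)

lemma sp_vec: "scalar_prod (vec n f) (vec n h) = (\<Sum>k<n. f k * h k)"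
  by (simp add: scalar_prod_def lessThan_atLeast0)

lemma mdel_mult:
  assumes "S \<in> carrier_mat p p" "k < p - 1"
  shows "(mat_delete S j j *\<^sub>v vec (p - 1) f) $ k = (\<Sum>l<p - 1. S $$ (skip_idx j k, skip_idx j l) * f l)"
  using assms by (simp add: mult_mat_vec_def row_def scalar_prod_def lessThan_atLeast0 mat_delete_idx)
lemma emb_quad:
  fixes S :: "real mat" and x :: "real vec"
  assumes C: "S \<in> carrier_mat p p" and sym: "\<And>a b. a < p \<Longrightarrow> b < p \<Longrightarrow> S $$ (a, b) = S $$ (b, a)"
    and j: "j < p" and x: "x \<in> carrier_vec (p - 1)"
    and w: "w = (\<lambda>i. if i = j then t else x $ (if i < j then i else i - 1))"
  shows "(\<Sum>i<p. \<Sum>k<p. w i * w k * S $$ (i, k)) = t^2 * S $$ (j, j)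
     + 2 * t * scalar_prod (vec (p - 1) (\<lambda>k. S $$ (j, skip_idx j k))) x + scalar_prod x (mat_delete S j j *\<^sub>v x)"
proof -
  let ?n = "p - 1"
  let ?sk = "skip_idx j"
  have wj: "w j = t" using w by simp
  have wsk: "\<And>k. w (?sk k) = x $ k" using w by (auto simp: skip_idx_def)
  have xv: "x = vec ?n (\<lambda>k. x $ k)" using x by auto
  have g: "scalar_prod (vec ?n (\<lambda>k. S $$ (j, ?sk k))) x = (\<Sum>b<?n. S $$ (j, ?sk b) * x $ b)"
    by (subst xv) (simp only: sp_vec)
  have Ax: "\<And>a. a < ?n \<Longrightarrow> (mat_delete S j j *\<^sub>v x) $ a = (\<Sum>b<?n. S $$ (?sk a, ?sk b) * x $ b)"
    by (subst xv, subst mdel_mult[OF C]) auto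
  have xAx: "scalar_prod x (mat_delete S j j *\<^sub>v x) = (\<Sum>a<?n. x $ a * (\<Sum>b<?n. S $$ (?sk a, ?sk b) * x $ b))"
  proof -
    have "scalar_prod x (mat_delete S j j *\<^sub>v x) = (\<Sum>a<?n. x $ a * (mat_delete S j j *\<^sub>v x) $ a)"
      using x C by (simp add: scalar_prod_def lessThan_atLeast0)
    also have "\<dots> = (\<Sum>a<?n. x $ a * (\<Sum>b<?n. S $$ (?sk a, ?sk b) * x $ b))"
      by (rule sum.cong) (simp_all add: Ax)
    finally show ?thesis .
  qed
  have inner: "\<And>i. (\<Sum>k<p. w i * w k * S $$ (i, k)) = w i * t * S $$ (i, j) + (\<Sum>b<?n. w i * x $ b * S $$ (i, ?sk b))"
    by (subst sum_skip2[OF j]) (simp add: wj wsk)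
  have "(\<Sum>i<p. \<Sum>k<p. w i * w k * S $$ (i, k))
     = (t * t * S $$ (j, j) + (\<Sum>b<?n. t * x $ b * S $$ (j, ?sk b)))
       + (\<Sum>a<?n. x $ a * t * S $$ (?sk a, j) + (\<Sum>b<?n. x $ a * x $ b * S $$ (?sk a, ?sk b)))"
    unfolding inner using sum_skip2[OF j, of "\<lambda>i. w i * t * S $$ (i, j) + (\<Sum>b<?n. w i * x $ b * S $$ (i, ?sk b))"] wj wsk
    by simp
  also have "\<dots> = t^2 * S $$ (j, j) + 2 * t * (\<Sum>b<?n. S $$ (j, ?sk b) * x $ b)
       + (\<Sum>a<?n. x $ a * (\<Sum>b<?n. S $$ (?sk a, ?sk b) * x $ b))"
  proof -
    have s: "\<And>a. a < ?n \<Longrightarrow> S $$ (?sk a, j) = S $$ (j, ?sk a)" using sym j skip_idx_lt by blast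
    have "(\<Sum>a<?n. x $ a * t * S $$ (?sk a, j)) = t * (\<Sum>b<?n. S $$ (j, ?sk b) * x $ b)"
      using s by (simp add: sum_distrib_left algebra_simps)
    moreover have "(\<Sum>b<?n. t * x $ b * S $$ (j, ?sk b)) = t * (\<Sum>b<?n. S $$ (j, ?sk b) * x $ b)"
      by (simp add: sum_distrib_left algebra_simps)
    moreover have "(\<Sum>a<?n. (\<Sum>b<?n. x $ a * x $ b * S $$ (?sk a, ?sk b))) = (\<Sum>a<?n. x $ a * (\<Sum>b<?n. S $$ (?sk a, ?sk b) * x $ b))"
      by (simp add: sum_distrib_left algebra_simps)
    ultimately show ?thesis by (simp add: sum.distrib power2_eq_square algebra_simps)
  qed
  finally show ?thesis unfolding g xAx .
qed
lemma quad_skip: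
  fixes S :: "real mat"
  assumes C: "S \<in> carrier_mat p p" and j: "j < p"
  shows "(\<Sum>i\<in>{..<p} - {j}. \<Sum>k\<in>{..<p} - {j}. w i * w k * S $$ (i, k))
    = scalar_prod (vec (p - 1) (\<lambda>k. w (skip_idx j k))) (mat_delete S j j *\<^sub>v vec (p - 1) (\<lambda>k. w (skip_idx j k)))"
proof -
  let ?n = "p - 1" and ?sk = "skip_idx j"
  have "(\<Sum>i\<in>{..<p} - {j}. \<Sum>k\<in>{..<p} - {j}. w i * w k * S $$ (i, k))
      = (\<Sum>a<?n. \<Sum>b<?n. w (?sk a) * w (?sk b) * S $$ (?sk a, ?sk b))"
    by (simp add: sum_skip1[OF j])
  also have "\<dots> = (\<Sum>a<?n. w (?sk a) * (mat_delete S j j *\<^sub>v vec ?n (\<lambda>k. w (?sk k))) $ a)"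
  proof (rule sum.cong)
    fix a assume "a \<in> {..<?n}"
    then have a: "a < ?n" by simp
    show "(\<Sum>b<?n. w (?sk a) * w (?sk b) * S $$ (?sk a, ?sk b)) = w (?sk a) * (mat_delete S j j *\<^sub>v vec ?n (\<lambda>k. w (?sk k))) $ a"
      unfolding mdel_mult[OF C a] by (simp add: sum_distrib_left algebra_simps)
  qed simp
  also have "\<dots> = scalar_prod (vec ?n (\<lambda>k. w (?sk k))) (mat_delete S j j *\<^sub>v vec ?n (\<lambda>k. w (?sk k)))"
    using C by (simp add: scalar_prod_def lessThan_atLeast0)
  finally show ?thesis .
qed

theorem proposition1:
  fixes M :: "'a measure" and p j :: nat and X :: "'a \<Rightarrow> nat \<Rightarrow> real"
    and Y :: "'a \<Rightarrow> real" and \<Sigma> :: "real mat"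
    and \<beta>s \<beta>j :: "nat \<Rightarrow> real"
  assumes "prob_space M"
    and "centered_gaussian_vector M p X \<Sigma>"
    and "pos_def_mat p \<Sigma>"
    and "Y \<in> borel_measurable M"
    and "integrable M (\<lambda>\<omega>. (Y \<omega>)\<^sup>2)"
    and "j < p"
    and "\<forall>w. lin_mse M X Y {..<p} \<beta>s \<le> lin_mse M X Y {..<p} w"
    and "\<forall>w. lin_mse M X Y ({..<p} - {j}) \<beta>j \<le> lin_mse M X Y ({..<p} - {j}) w"
  shows
    "let VI_DR = lin_mse M X Y ({..<p} - {j}) \<beta>s - lin_mse M X Y {..<p} \<beta>s;
         VI_RT = lin_mse M X Y ({..<p} - {j}) \<beta>j - lin_mse M X Y {..<p} \<beta>s;
         \<gamma> = vec (p - 1) (\<lambda>k. integral\<^sup>L M (\<lambda>\<omega>. X \<omega> j * X \<omega> (skip_idx j k)));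
         \<Sigma>j = mat_delete \<Sigma> j j;
         EXY = vec (p - 1) (\<lambda>k. integral\<^sup>L M (\<lambda>\<omega>. X \<omega> (skip_idx j k) * Y \<omega>));
         q = \<gamma> \<bullet> (inv_mat \<Sigma>j *\<^sub>v \<gamma>)
     in VI_DR - VI_RT =
        q / (\<Sigma> $$ (j, j) - q)\<^sup>2 *
        (integral\<^sup>L M (\<lambda>\<omega>. X \<omega> j * Y \<omega>) - \<gamma> \<bullet> (inv_mat \<Sigma>j *\<^sub>v EXY))\<^sup>2"
proof -
  note P = assms(1) and G = assms(2) and pd = assms(3) and Ym = assms(4) and Y2 = assms(5)
    and j = assms(6) and min1 = assms(7) and min2 = assms(8)
  let ?n = "p - 1" and ?sk = "skip_idx j" and ?I = "{..<p} - {j}"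
  have C: "\<Sigma> \<in> carrier_mat p p" and T: "\<Sigma>\<^sup>T = \<Sigma>" using pd unfolding pos_def_mat_def by auto
  have sym: "\<And>a b. a < p \<Longrightarrow> b < p \<Longrightarrow> \<Sigma> $$ (a, b) = \<Sigma> $$ (b, a)"
    using T C by (metis carrier_matD index_transpose_mat(1))
  have diag: "\<Sigma> $$ (m, m) > 0" if m: "m < p" for m
  proof -
    have "(\<Sum>l<p. \<Sum>k<p. (if l = m then 1 else 0) * (if k = m then 1 else 0) * \<Sigma> $$ (l, k)) > 0"
      by (rule quad_nonneg(2)[OF pd]) (use m in auto)
    then show ?thesis using m by (simp add: delta_sum2 delta_sum1 mult.assoc)
  qed
  define b where "b = (\<lambda>i. integral\<^sup>L M (\<lambda>\<omega>. X \<omega> i * Y \<omega>))"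
  define EY2 where "EY2 = integral\<^sup>L M (\<lambda>\<omega>. (Y \<omega>)\<^sup>2)"
  have mse: "\<And>I w. I \<subseteq> {..<p} \<Longrightarrow> lin_mse M X Y I w = EY2 - 2 * (\<Sum>i\<in>I. w i * b i) + (\<Sum>i\<in>I. \<Sum>k\<in>I. w i * w k * \<Sigma> $$ (i, k))"
    unfolding b_def EY2_def by (rule mse_expand[OF P G pd Ym Y2])
  have N1: "(\<Sum>k<p. \<Sigma> $$ (m, k) * \<beta>s k) = b m" if m: "m < p" for m
  proof -
    have mn: "\<And>w. EY2 - 2 * (\<Sum>i<p. w i * b i) + (\<Sum>i<p. \<Sum>k<p. w i * w k * \<Sigma> $$ (i, k))
      \<ge> EY2 - 2 * (\<Sum>i<p. \<beta>s i * b i) + (\<Sum>i<p. \<Sum>k<p. \<beta>s i * \<beta>s k * \<Sigma> $$ (i, k))"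
      using min1 mse[of "{..<p}"] by simp
    have "\<forall>i\<in>{..<p}. \<forall>k\<in>{..<p}. \<Sigma> $$ (i, k) = \<Sigma> $$ (k, i)" using sym by auto
    from normal_eq[where S="{..<p}" and Sg="\<lambda>i k. \<Sigma> $$ (i, k)" and m=m and C=EY2 and b=b and \<beta>=\<beta>s, OF _ this _ _ mn]
    show ?thesis using m diag by simp
  qed
  have N2: "(\<Sum>k\<in>?I. \<Sigma> $$ (m, k) * \<beta>j k) = b m" if m: "m \<in> ?I" for m
  proof -
    have mn: "\<And>w. EY2 - 2 * (\<Sum>i\<in>?I. w i * b i) + (\<Sum>i\<in>?I. \<Sum>k\<in>?I. w i * w k * \<Sigma> $$ (i, k))
      \<ge> EY2 - 2 * (\<Sum>i\<in>?I. \<beta>j i * b i) + (\<Sum>i\<in>?I. \<Sum>k\<in>?I. \<beta>j i * \<beta>j k * \<Sigma> $$ (i, k))"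
      using min2 mse[of ?I] by auto
    have "\<forall>i\<in>?I. \<forall>k\<in>?I. \<Sigma> $$ (i, k) = \<Sigma> $$ (k, i)" using sym by auto
    from normal_eq[where S="?I" and Sg="\<lambda>i k. \<Sigma> $$ (i, k)" and m=m and C=EY2 and b=b and \<beta>=\<beta>j, OF _ this _ _ mn]
    show ?thesis using m diag by simp
  qed
  define A where "A = mat_delete \<Sigma> j j"
  have AC: "A \<in> carrier_mat ?n ?n" unfolding A_def using mat_delete_carrier[OF C] .
  have Aidx: "\<And>k l. k < ?n \<Longrightarrow> l < ?n \<Longrightarrow> A $$ (k, l) = \<Sigma> $$ (?sk k, ?sk l)"
    unfolding A_def using mat_delete_idx[OF C] by blast
  have AT: "A\<^sup>T = A"
    by (rule eq_matI) (use AC Aidx sym skip_idx_lt[OF j] in auto)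
  define g where "g = vec ?n (\<lambda>k. \<Sigma> $$ (j, ?sk k))"
  have gdef: "vec ?n (\<lambda>k. integral\<^sup>L M (\<lambda>\<omega>. X \<omega> j * X \<omega> (?sk k))) = g"
    unfolding g_def by (rule eq_vecI) (use cgv_cov[OF P G pd j] skip_idx_lt[OF j] in auto)
  define c where "c = vec ?n (\<lambda>k. b (?sk k))"
  have cdef: "vec ?n (\<lambda>k. integral\<^sup>L M (\<lambda>\<omega>. X \<omega> (?sk k) * Y \<omega>)) = c"
    unfolding c_def b_def ..
  have gc: "g \<in> carrier_vec ?n" "c \<in> carrier_vec ?n" unfolding g_def c_def by auto
  define emb where "emb = (\<lambda>t (x :: real vec) i. if i = j then t else x $ (if i < j then i else i - 1))"
  have embq: "\<And>t x. x \<in> carrier_vec ?n \<Longrightarrow> (\<Sum>i<p. \<Sum>k<p. emb t x i * emb t x k * \<Sigma> $$ (i, k))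
      = t^2 * \<Sigma> $$ (j, j) + 2 * t * scalar_prod g x + scalar_prod x (A *\<^sub>v x)"
    unfolding g_def A_def by (rule emb_quad[OF C sym j]) (auto simp: emb_def)
  have embsk: "\<And>t x k. emb t x (?sk k) = x $ k" by (auto simp: emb_def skip_idx_def)
  have embj: "\<And>t x. emb t x j = t" by (simp add: emb_def)
  have detA: "det A \<noteq> 0"
  proof
    assume "det A = 0"
    then obtain x where x: "x \<in> carrier_vec ?n" "x \<noteq> 0\<^sub>v ?n" "A *\<^sub>v x = 0\<^sub>v ?n"
      using det_0_iff_vec_prod_zero_field[OF AC] by blast
    obtain k where k: "k < ?n" "x $ k \<noteq> 0"
    proof -
      have "\<exists>k < ?n. x $ k \<noteq> 0"
      proof (rule ccontr)
        assume "\<not> (\<exists>k < ?n. x $ k \<noteq> 0)"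
        then have "x = 0\<^sub>v ?n" using x(1) by (intro eq_vecI) auto
        then show False using x(2) by simp
      qed
      then show ?thesis using that by blast
    qed
    have "(\<Sum>i<p. \<Sum>k<p. emb 0 x i * emb 0 x k * \<Sigma> $$ (i, k)) > 0"
      by (rule quad_nonneg(2)[OF pd]) (use k embsk skip_idx_lt[OF j] in metis)
    moreover have "(\<Sum>i<p. \<Sum>k<p. emb 0 x i * emb 0 x k * \<Sigma> $$ (i, k)) = 0"
      using embq[OF x(1), of 0] x(1,3) by simp
    ultimately show False by simp
  qed
  have unit: "A \<in> Units (ring_mat TYPE(real) ?n ())"
    by (rule det_non_zero_imp_unit[OF AC detA])
  obtain Ai where Ai: "mat_inverse A = Some Ai"
    using mat_inverse(1)[OF AC, where b="()"] unit by (cases "mat_inverse A") blast+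
  have AiP: "A * Ai = 1\<^sub>m ?n" "Ai * A = 1\<^sub>m ?n" "Ai \<in> carrier_mat ?n ?n"
    using mat_inverse(2)[OF AC Ai] by auto
  have invA: "inv_mat A = Ai" unfolding inv_mat_def Ai by simp
  have schur: "\<Sigma> $$ (j, j) - scalar_prod g (Ai *\<^sub>v g) > 0"
  proof -
    define z where "z = Ai *\<^sub>v g"
    have z: "z \<in> carrier_vec ?n" unfolding z_def using AiP(3) gc(1) by simp
    have Az: "A *\<^sub>v z = g" unfolding z_def using AC AiP gc(1) by (metis assoc_mult_mat_vec one_mult_mat_vec)
    have zg: "scalar_prod z g = scalar_prod g z" using comm_scalar_prod[OF z gc(1)] .
    have mz: "(-1) \<cdot>\<^sub>v z \<in> carrier_vec ?n" using z by simp
    have "(\<Sum>i<p. \<Sum>k<p. emb 1 ((-1) \<cdot>\<^sub>v z) i * emb 1 ((-1) \<cdot>\<^sub>v z) k * \<Sigma> $$ (i, k)) > 0"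
      by (rule quad_nonneg(2)[OF pd]) (use j embj in auto)
    moreover have "(\<Sum>i<p. \<Sum>k<p. emb 1 ((-1) \<cdot>\<^sub>v z) i * emb 1 ((-1) \<cdot>\<^sub>v z) k * \<Sigma> $$ (i, k))
        = \<Sigma> $$ (j, j) - scalar_prod g z"
      unfolding embq[OF mz] using z gc(1) AC Az zg
      by (simp add: mult_mat_vec[of _ ?n ?n] scalar_prod_smult_distrib[of _ ?n] smult_scalar_prod_distrib[of _ ?n])
    ultimately show ?thesis unfolding z_def by simp
  qed
  define u where "u = vec ?n (\<lambda>k. \<beta>s (?sk k))"
  define v where "v = vec ?n (\<lambda>k. \<beta>j (?sk k))"
  have uv: "u \<in> carrier_vec ?n" "v \<in> carrier_vec ?n" unfolding u_def v_def by auto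
  have V1: "A *\<^sub>v v = c"
  proof (rule eq_vecI)
    fix k assume "k < dim_vec c"
    then have k: "k < ?n" unfolding c_def by simp
    have "(A *\<^sub>v v) $ k = (\<Sum>l<?n. \<Sigma> $$ (?sk k, ?sk l) * \<beta>j (?sk l))"
      unfolding A_def v_def by (rule mdel_mult[OF C k])
    also have "\<dots> = (\<Sum>l\<in>?I. \<Sigma> $$ (?sk k, l) * \<beta>j l)" by (simp add: sum_skip1[OF j])
    also have "\<dots> = b (?sk k)" by (rule N2) (use skip_idx_lt[OF j k] skip_idx_ne in auto)
    finally show "(A *\<^sub>v v) $ k = c $ k" unfolding c_def using k by simp
  qed (use AC gc in auto)
  have V2: "A *\<^sub>v u + \<beta>s j \<cdot>\<^sub>v g = c"
  proof (rule eq_vecI)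
    fix k assume "k < dim_vec c"
    then have k: "k < ?n" unfolding c_def by simp
    have sk: "?sk k < p" using skip_idx_lt[OF j k] .
    have "(A *\<^sub>v u) $ k = (\<Sum>l<?n. \<Sigma> $$ (?sk k, ?sk l) * \<beta>s (?sk l))"
      unfolding A_def u_def by (rule mdel_mult[OF C k])
    moreover have "b (?sk k) = \<Sigma> $$ (?sk k, j) * \<beta>s j + (\<Sum>l<?n. \<Sigma> $$ (?sk k, ?sk l) * \<beta>s (?sk l))"
      using N1[OF sk] by (simp add: sum_skip2[OF j])
    moreover have "\<Sigma> $$ (?sk k, j) = \<Sigma> $$ (j, ?sk k)" using sym sk j by blast
    ultimately show "(A *\<^sub>v u + \<beta>s j \<cdot>\<^sub>v g) $ k = c $ k"
      unfolding c_def g_def using k AC uv by (simp add: algebra_simps)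
  qed (use AC gc in auto)
  have V3: "scalar_prod g u + \<Sigma> $$ (j, j) * \<beta>s j = b j"
    using N1[OF j] unfolding g_def u_def sp_vec by (simp add: sum_skip2[OF j] algebra_simps)
  have V4: "\<And>w. lin_mse M X Y ?I w = EY2 - 2 * scalar_prod (vec ?n (\<lambda>k. w (?sk k))) c
      + scalar_prod (vec ?n (\<lambda>k. w (?sk k))) (A *\<^sub>v vec ?n (\<lambda>k. w (?sk k)))"
    unfolding mse[OF Diff_subset] A_def quad_skip[OF C j, symmetric] c_def sp_vec
    by (simp add: sum_skip1[OF j])
  have fin: "(-2 * scalar_prod u c + scalar_prod u (A *\<^sub>v u)) - (-2 * scalar_prod v c + scalar_prod v (A *\<^sub>v v))
     = scalar_prod g (Ai *\<^sub>v g) / (\<Sigma> $$ (j, j) - scalar_prod g (Ai *\<^sub>v g))\<^sup>2 * (b j - scalar_prod g (Ai *\<^sub>v c))\<^sup>2"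
    by (rule final_alg[OF AC AiP(3) AiP(2) AiP(1) AT uv gc(2) gc(1) V1 V2 V3]) (use schur in simp)
  have "lin_mse M X Y ?I \<beta>s - lin_mse M X Y ?I \<beta>j
     = (-2 * scalar_prod u c + scalar_prod u (A *\<^sub>v u)) - (-2 * scalar_prod v c + scalar_prod v (A *\<^sub>v v))"
    unfolding V4 u_def v_def by simp
  then show ?thesis unfolding Let_def gdef cdef A_def[symmetric] invA fin
    by (simp add: b_def)
qed

end
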